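(* Let $h=z+\sum_{l\ge1}h_lz^{-l}$ be a formal Laurent series with complex coefficients $h_l$, put $\lambda=z^2$, and let $H^{(k)}$ and $V^{(j)}$ be as defined in the context below. Then for every integer $k\ge0$: (1) the entries of $V^{(2k+1)}$ are polynomials in $\lambda$ whose coefficients depend only on $(h_1,\dots,h_{2k+1})$, and the map $(h_1,\dots,h_{2k+1})\mapsto V^{(2k+1)}$ is injective; (2) $\mathrm{Tr}\,V^{(2k+1)}=0$; (3) for every integer $0\le i\le k$, $$V^{(2i+1)}=\big(\lambda^{i-k}V^{(2k+1)}\big)_+-\alpha_{ik}\begin{pmatrix}0&0\\1&0\end{pmatrix},$$ where $(\cdot)_+$ denotes the projection onto the nonnegative powers of $\lambda$ (applied entrywise), and $\alpha_{ik}$ is the $(1,2)$ entry of the coefficient of $\lambda^{k-i-1}$ in $V^{(2k+1)}$ (the coefficient of $\lambda^{-1}$ being $0$).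
   Context: Given $h=z+\sum_{l\ge1}h_lz^{-l}$, define Laurent series $H^{(k)}$, $k\ge0$, by $H^{(0)}=1$, $H^{(1)}=h$, $H^{(2)}=z^2$ and recursively $H^{(k+2)}=z^2H^{(k)}-H^k_1H^{(1)}-H^k_2$ for $k\ge1$, where $H^k_l$ denotes the coefficient of $z^{-l}$ in $H^{(k)}$ (so $H^{(k)}=z^k+\sum_{l\ge1}H^k_lz^{-l}$ and $H^1_l=h_l$). Every $H^{(k)}$, and every series $H^{(j+1)}+\sum_{l=1}^jh_lH^{(j-l)}+H^j_1$, can be written uniquely as $a(\lambda)+b(\lambda)h$ with $a,b$ polynomials in $\lambda=z^2$ (uniqueness because the elements $\lambda^j,\lambda^jh$, $j\ge0$, are linearly independent). For $j\ge1$, $V^{(j)}$ is the $2\times2$ matrix with polynomial entries in $\lambda$ whose first row is $(p_j,q_j)$, where $H^{(j)}=p_j(\lambda)+q_j(\lambda)h$, and whose second row is $(a_j,b_j)$, where $H^{(j+1)}+\sum_{l=1}^jh_lH^{(j-l)}+H^j_1=a_j(\lambda)+b_j(\lambda)h$. Equivalently, $V^{(j)}$ is defined by $\big(\partial_{t_j}+H^{(j)}\big)(1,h)^T=V^{(j)}(1,h)^T$, where $\partial h/\partial t_j=-hH^{(j)}+H^{(j+1)}+\sum_{l=1}^jh_lH^{(j-l)}+H^j_1$. For example $V^{(1)}=\begin{pmatrix}0&1\\ \lambda+2h_1&0\end{pmatrix}$. *)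

theory Defs
  imports "HOL-Analysis.Analysis" "HOL-Computational_Algebra.Polynomial"
begin

text \<open>Formal Laurent series in z with finitely many positive powers are represented by
  their coefficient functions  int => complex  (value at n = coefficient of z^n).
  The series h = z + sum_{l>=1} h_l z^(-l) is determined by hs :: nat => complex,
  with hs l = h_l for l >= 1 (hs 0 is irrelevant).\<close>

definition hser :: "(nat \<Rightarrow> complex) \<Rightarrow> int \<Rightarrow> complex" where
  "hser hs n = (if n = 1 then 1 else if n \<le> -1 then hs (nat (- n)) else 0)"

fun H :: "(nat \<Rightarrow> complex) \<Rightarrow> nat \<Rightarrow> int \<Rightarrow> complex" where
  "H hs 0 = (\<lambda>n. if n = 0 then 1 else 0)"
| "H hs (Suc 0) = hser hs"
| "H hs (Suc (Suc 0)) = (\<lambda>n. if n = 2 then 1 else 0)"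
| "H hs (Suc (Suc (Suc k))) =
     (\<lambda>n. H hs (Suc k) (n - 2) - H hs (Suc k) (-1) * hser hs n
          - (if n = 0 then H hs (Suc k) (-2) else 0))"

text \<open>The series a(lambda) + b(lambda) h, with lambda = z^2.\<close>
definition lc :: "(nat \<Rightarrow> complex) \<Rightarrow> complex poly \<Rightarrow> complex poly \<Rightarrow> int \<Rightarrow> complex" where
  "lc hs a b n =
     (if n \<ge> 0 \<and> even n then coeff a (nat (n div 2)) else 0)
     + (\<Sum>j\<le>degree b. coeff b j * hser hs (n - 2 * int j))"

definition decomp :: "(nat \<Rightarrow> complex) \<Rightarrow> (int \<Rightarrow> complex) \<Rightarrow> complex poly \<times> complex poly" where
  "decomp hs f = (THE ab. lc hs (fst ab) (snd ab) = f)"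

definition S :: "(nat \<Rightarrow> complex) \<Rightarrow> nat \<Rightarrow> int \<Rightarrow> complex" where
  "S hs j = (\<lambda>n. H hs (j + 1) n + (\<Sum>l = 1..j. hs l * H hs (j - l) n)
                 + (if n = 0 then H hs j (-1) else 0))"

definition V :: "(nat \<Rightarrow> complex) \<Rightarrow> nat \<Rightarrow> complex poly ^ 2 ^ 2" where
  "V hs j = (\<chi> r c.
      let ab = (if r = 1 then decomp hs (H hs j) else decomp hs (S hs j))
      in if c = 1 then fst ab else snd ab)"

text \<open>(.)_+ of lambda^(-m) p : the nonnegative-power part of p / lambda^m.\<close>
definition plus_part :: "nat \<Rightarrow> complex poly ^ 2 ^ 2 \<Rightarrow> complex poly ^ 2 ^ 2" where
  "plus_part m A = (\<chi> r c. poly_shift m (A $ r $ c))"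

definition E21 :: "complex \<Rightarrow> complex poly ^ 2 ^ 2" where
  "E21 a = (\<chi> r c. if r = 2 \<and> c = 1 then [:a:] else 0)"

end

theory Submission
  imports Defs
begin


lemma lc_N:
  assumes "degree b \<le> N"
  shows "lc hs a b n = (if n \<ge> 0 \<and> even n then coeff a (nat (n div 2)) else 0)
     + (\<Sum>j\<le>N. coeff b j * hser hs (n - 2 * int j))"
proof -
  have "(\<Sum>j\<le>degree b. coeff b j * hser hs (n - 2 * int j)) = (\<Sum>j\<le>N. coeff b j * hser hs (n - 2 * int j))"
    by (rule sum.mono_neutral_left) (use assms in \<open>auto simp: coeff_eq_0\<close>)
  then show ?thesis by (simp add: lc_def)
qed

lemma lc_add: "lc hs (a + a') (b + b') n = lc hs a b n + lc hs a' b' n"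
proof -
  define N where "N = max (degree b) (degree b')"
  have d: "degree (b + b') \<le> N" "degree b \<le> N" "degree b' \<le> N"
    using degree_add_le_max[of b b'] by (auto simp: N_def)
  show ?thesis unfolding lc_N[OF d(1)] lc_N[OF d(2)] lc_N[OF d(3)]
    by (simp add: algebra_simps sum.distrib)
qed

lemma lc_diff: "lc hs (a - a') (b - b') n = lc hs a b n - lc hs a' b' n"
proof -
  define N where "N = max (degree b) (degree b')"
  have d: "degree (b - b') \<le> N" "degree b \<le> N" "degree b' \<le> N"
    using degree_diff_le_max[of b b'] by (auto simp: N_def)
  show ?thesis unfolding lc_N[OF d(1)] lc_N[OF d(2)] lc_N[OF d(3)]
    by (simp add: algebra_simps sum_subtractf)
qed

lemma lc_smult: "lc hs (smult c a) (smult c b) n = c * lc hs a b n"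
proof -
  have d: "degree (smult c b) \<le> degree b" "degree b \<le> degree b"
    by (auto simp: degree_smult_le)
  show ?thesis unfolding lc_N[OF d(1)] lc_N[OF d(2)]
    by (simp add: algebra_simps sum_distrib_left)
qed

lemma lc_zero: "lc hs 0 0 n = 0"
  by (simp add: lc_def)

lemma lc_sum: "finite A \<Longrightarrow> lc hs (\<Sum>l\<in>A. f l) (\<Sum>l\<in>A. g l) n = (\<Sum>l\<in>A. lc hs (f l) (g l) n)"
  by (induction A rule: finite_induct) (simp_all add: lc_zero lc_add)

lemma lc_const: "lc hs [:c:] 0 n = (if n = 0 then c else 0)"
  by (auto simp: lc_def coeff_pCons split: nat.splits elim!: evenE)

lemma lc_shift: "lc hs (pCons 0 a) (pCons 0 b) n = lc hs a b (n - 2)"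
proof -
  have d: "degree (pCons 0 b) \<le> Suc (degree b)" "degree b \<le> degree b"
    by (auto simp: degree_pCons_le)
  have A: "(if n \<ge> 0 \<and> even n then coeff (pCons 0 a) (nat (n div 2)) else 0)
      = (if n - 2 \<ge> 0 \<and> even (n - 2) then coeff a (nat ((n - 2) div 2)) else 0)"
  proof (cases "n \<ge> 0 \<and> even n")
    case True
    define m where "m = nat (n div 2)"
    have m: "n = 2 * int m" using True by (auto simp: m_def elim!: evenE)
    show ?thesis
    proof (cases m)
      case 0 then show ?thesis using m by simp
    next
      case (Suc m') 
      then have "nat (n div 2) = Suc m'" "nat ((n - 2) div 2) = m'" using m by auto
      then show ?thesis using True m Suc by simp
    qed
  next
    case False then show ?thesis by auto
  qed
  have B: "(\<Sum>j\<le>Suc (degree b). coeff (pCons 0 b) j * hser hs (n - 2 * int j))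
      = (\<Sum>j\<le>degree b. coeff b j * hser hs (n - 2 - 2 * int j))"
    by (subst sum.atMost_Suc_shift) (simp add: algebra_simps)
  show ?thesis unfolding lc_N[OF d(1)] lc_N[OF d(2)] A B by simp
qed

lemma lc_zero_imp:
  assumes "\<And>n. lc hs a b n = 0"
  shows "b = 0 \<and> a = 0"
proof -
  have b: "b = 0"
  proof (rule ccontr)
    assume nz: "b \<noteq> 0"
    define d where "d = degree b"
    have "lc hs a b (2 * int d + 1) = (\<Sum>j\<le>d. coeff b j * hser hs (2 * int d + 1 - 2 * int j))"
      using lc_N[of b d hs a "2 * int d + 1"] by (simp add: d_def)
    also have "\<dots> = (\<Sum>j\<le>d. if j = d then coeff b j else 0)"
      by (rule sum.cong) (auto simp: hser_def)
    also have "\<dots> = lead_coeff b" by (simp add: d_def)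
    finally show False using assms nz by simp
  qed
  have "coeff a i = 0" for i
    using assms[of "2 * int i"] by (simp add: lc_def b)
  then show ?thesis using b by (simp add: poly_eqI)
qed

lemma lc_inj:
  assumes "lc hs a b = lc hs a' b'"
  shows "a = a' \<and> b = b'"
proof -
  have "\<And>n. lc hs (a - a') (b - b') n = 0" by (simp add: lc_diff assms)
  from lc_zero_imp[OF this] show ?thesis by simp
qed

lemma decomp_lc: "decomp hs (lc hs a b) = (a, b)"
  unfolding decomp_def
proof (rule the_equality)
  fix ab assume "lc hs (fst ab) (snd ab) = lc hs a b"
  from lc_inj[OF this] show "ab = (a, b)" by (simp add: prod_eq_iff)
qed simp



fun PA :: "(nat \<Rightarrow> complex) \<Rightarrow> nat \<Rightarrow> complex poly" where
  "PA hs 0 = 1"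
| "PA hs (Suc 0) = 0"
| "PA hs (Suc (Suc 0)) = monom 1 1"
| "PA hs (Suc (Suc (Suc k))) = pCons 0 (PA hs (Suc k)) - [:H hs (Suc k) (-2):]"

fun PB :: "(nat \<Rightarrow> complex) \<Rightarrow> nat \<Rightarrow> complex poly" where
  "PB hs 0 = 0"
| "PB hs (Suc 0) = 1"
| "PB hs (Suc (Suc 0)) = 0"
| "PB hs (Suc (Suc (Suc k))) = pCons 0 (PB hs (Suc k)) - [:H hs (Suc k) (-1):]"

lemma H_lc: "H hs m = lc hs (PA hs m) (PB hs m)"
proof (induction hs m rule: H.induct)
  case (1 hs)
  show ?case by (auto simp: lc_def fun_eq_iff elim!: evenE)
next
  case (2 hs)
  show ?case by (auto simp: lc_def fun_eq_iff)
next
  case (3 hs)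
  show ?case by (auto simp: lc_def fun_eq_iff coeff_monom elim!: evenE)
next
  case (4 hs k)
  show ?case
  proof (rule ext)
    fix n
    have "lc hs (PA hs (Suc (Suc (Suc k)))) (PB hs (Suc (Suc (Suc k)))) n
        = lc hs (PA hs (Suc k)) (PB hs (Suc k)) (n - 2) - lc hs [:H hs (Suc k) (-2):] [:H hs (Suc k) (-1):] n"
      by (simp only: PA.simps PB.simps lc_diff lc_shift)
    also have "lc hs [:H hs (Suc k) (-2):] [:H hs (Suc k) (-1):] n
       = (if n = 0 then H hs (Suc k) (-2) else 0) + H hs (Suc k) (-1) * hser hs n"
      by (auto simp: lc_def coeff_pCons split: nat.splits elim!: evenE)
    finally show "H hs (Suc (Suc (Suc k))) n = lc hs (PA hs (Suc (Suc (Suc k)))) (PB hs (Suc (Suc (Suc k)))) n"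
      using 4 by simp
  qed
qed

definition SA :: "(nat \<Rightarrow> complex) \<Rightarrow> nat \<Rightarrow> complex poly" where
  "SA hs j = PA hs (j+1) + (\<Sum>l=1..j. smult (hs l) (PA hs (j-l))) + [:H hs j (-1):]"

definition SB :: "(nat \<Rightarrow> complex) \<Rightarrow> nat \<Rightarrow> complex poly" where
  "SB hs j = PB hs (j+1) + (\<Sum>l=1..j. smult (hs l) (PB hs (j-l)))"

lemma S_lc: "S hs j = lc hs (SA hs j) (SB hs j)"
proof (rule ext)
  fix n
  have "lc hs (SA hs j) (SB hs j) n = lc hs (PA hs (j+1) + (\<Sum>l=1..j. smult (hs l) (PA hs (j-l))) + [:H hs j (-1):])
     (PB hs (j+1) + (\<Sum>l=1..j. smult (hs l) (PB hs (j-l))) + 0) n"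
    by (simp add: SA_def SB_def)
  also have "\<dots> = lc hs (PA hs (j+1)) (PB hs (j+1)) n + (\<Sum>l=1..j. lc hs (smult (hs l) (PA hs (j-l))) (smult (hs l) (PB hs (j-l))) n)
      + (if n = 0 then H hs j (-1) else 0)"
    by (simp only: lc_add lc_sum[OF finite_atLeastAtMost] lc_const)
  also have "\<dots> = S hs j n"
    by (simp add: S_def lc_smult H_lc)
  finally show "S hs j n = lc hs (SA hs j) (SB hs j) n" by simp
qed

lemma V11: "V hs j $ 1 $ 1 = PA hs j"
  by (simp add: V_def H_lc decomp_lc)
lemma V12: "V hs j $ 1 $ 2 = PB hs j"
  by (simp add: V_def H_lc decomp_lc)
lemma V21: "V hs j $ 2 $ 1 = SA hs j"
  by (simp add: V_def S_lc decomp_lc)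
lemma V22: "V hs j $ 2 $ 2 = SB hs j"
  by (simp add: V_def S_lc decomp_lc)

lemma PA_shift1: "coeff (PA hs (m+2)) (Suc n) = coeff (PA hs m) n"
proof (cases m)
  case 0 then show ?thesis by (simp add: coeff_monom)
next
  case (Suc k)
  then show ?thesis by (simp add: numeral_2_eq_2 coeff_pCons)
qed

lemma PB_shift1: "coeff (PB hs (m+2)) (Suc n) = coeff (PB hs m) n"
proof (cases m)
  case 0 then show ?thesis by (simp add: numeral_2_eq_2)
next
  case (Suc k)
  then show ?thesis by (simp add: numeral_2_eq_2 coeff_pCons)
qed

lemma PA_shift: "coeff (PA hs (m + 2*d)) (n + d) = coeff (PA hs m) n"
proof (induction d)
  case (Suc d)
  have "coeff (PA hs (m + 2 * Suc d)) (n + Suc d) = coeff (PA hs ((m + 2*d) + 2)) (Suc (n + d))"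
    by (simp add: algebra_simps)
  then show ?case using Suc PA_shift1 by simp
qed simp

lemma PB_shift: "coeff (PB hs (m + 2*d)) (n + d) = coeff (PB hs m) n"
proof (induction d)
  case (Suc d)
  have "coeff (PB hs (m + 2 * Suc d)) (n + Suc d) = coeff (PB hs ((m + 2*d) + 2)) (Suc (n + d))"
    by (simp add: algebra_simps)
  then show ?case using Suc PB_shift1 by simp
qed simp

lemma PA_van: "2 * N > m \<Longrightarrow> coeff (PA hs m) N = 0"
proof (induction m arbitrary: N rule: less_induct)
  case (less m)
  show ?case
  proof (cases "m < 2")
    case True
    then have "m = 0 \<or> m = 1" by auto
    then show ?thesis using less.prems by auto
  next
    case False
    then obtain m' where m': "m = m' + 2" by (metis add.commute le_Suc_ex not_less)
    then obtain N' where N': "N = Suc N'" using less.prems by (cases N) auto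
    show ?thesis using less.IH[of m' N'] less.prems m' N' PA_shift1 by simp
  qed
qed

lemma PB_van: "2 * N \<ge> m \<Longrightarrow> coeff (PB hs m) N = 0"
proof (induction m arbitrary: N rule: less_induct)
  case (less m)
  show ?case
  proof (cases "m < 2")
    case True
    then have "m = 0 \<or> m = 1" by auto
    then show ?thesis using less.prems by (cases N) auto
  next
    case False
    then obtain m' where m': "m = m' + 2" by (metis add.commute le_Suc_ex not_less)
    then obtain N' where N': "N = Suc N'" using less.prems by (cases N) auto
    show ?thesis using less.IH[of m' N'] less.prems m' N' PB_shift1 by simp
  qed
qed

lemma degree_PB: "m \<le> 2 * N + 1 \<Longrightarrow> degree (PB hs m) \<le> N"
  by (rule degree_le) (auto intro!: PB_van)

lemma H_neg:
  assumes "degree (PB hs m) \<le> N" "l \<ge> 1"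
  shows "H hs m (- int l) = (\<Sum>j\<le>N. coeff (PB hs m) j * hs (l + 2*j))"
proof -
  have "H hs m (- int l) = (\<Sum>j\<le>N. coeff (PB hs m) j * hser hs (- int l - 2 * int j))"
    using assms by (simp add: H_lc lc_N[OF assms(1)])
  also have "\<dots> = (\<Sum>j\<le>N. coeff (PB hs m) j * hs (l + 2*j))"
  proof (rule sum.cong)
    fix j assume "j \<in> {..N}"
    have E: "nat (2 * int j + int l) = l + 2*j" by (simp add: nat_eq_iff)
    show "coeff (PB hs m) j * hser hs (- int l - 2 * int j) = coeff (PB hs m) j * hs (l + 2*j)"
      using assms(2) by (simp add: hser_def E)
  qed simp
  finally show ?thesis .
qed

lemma PAB_even: "PA hs (2*m) = monom 1 m \<and> PB hs (2*m) = 0"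
proof (induction m)
  case 0 then show ?case by (simp add: monom_0 one_pCons)
next
  case (Suc m)
  show ?case
  proof (cases m)
    case 0 then show ?thesis by (simp add: numeral_2_eq_2)
  next
    case (Suc m')
    have e: "2 * Suc m = Suc (Suc (Suc (Suc (2 * m'))))" "2 * m = Suc (Suc (2*m'))" using Suc by auto
    have h: "H hs (2*m) (- 2) = 0" "H hs (2*m) (- 1) = 0"
      using Suc.IH by (auto simp: H_lc lc_def coeff_monom)
    show ?thesis using Suc.IH h unfolding e by (simp add: Suc monom_Suc)
  qed
qed



lemma sum_shift_gen:
  fixes P :: "nat \<Rightarrow> complex poly"
  assumes sh: "\<And>m d n. coeff (P (m + 2*d)) (n+d) = coeff (P m) n"
    and van: "\<And>m N. 2*N > m \<Longrightarrow> coeff (P m) N = 0" and ik: "i \<le> k"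
  shows "(\<Sum>l=1..2*k+1. hs l * coeff (P (2*k+1-l)) (n + (k-i)))
       = (\<Sum>l=1..2*i+1. hs l * coeff (P (2*i+1-l)) n)"
proof -
  have U: "{1..2*k+1} = {1..2*i+1} \<union> {2*i+2..2*k+1}" using ik by auto
  have Z: "(\<Sum>l\<in>{2*i+2..2*k+1}. hs l * coeff (P (2*k+1-l)) (n + (k-i))) = 0"
    by (rule sum.neutral) (use ik in \<open>auto intro!: van\<close>)
  have E: "(\<Sum>l\<in>{1..2*i+1}. hs l * coeff (P (2*k+1-l)) (n + (k-i)))
      = (\<Sum>l=1..2*i+1. hs l * coeff (P (2*i+1-l)) n)"
  proof (rule sum.cong)
    fix l assume "l \<in> {1..2*i+1}"
    then have "2*k+1-l = (2*i+1-l) + 2*(k-i)" using ik by auto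
    then show "hs l * coeff (P (2*k+1-l)) (n + (k-i)) = hs l * coeff (P (2*i+1-l)) n"
      using sh by simp
  qed simp
  have "(\<Sum>l=1..2*k+1. hs l * coeff (P (2*k+1-l)) (n + (k-i)))
     = (\<Sum>l\<in>{1..2*i+1}. hs l * coeff (P (2*k+1-l)) (n + (k-i)))
       + (\<Sum>l\<in>{2*i+2..2*k+1}. hs l * coeff (P (2*k+1-l)) (n + (k-i)))"
    unfolding U by (rule sum.union_disjoint) auto
  then show ?thesis using Z E by simp
qed

lemma coeff_SA: "coeff (SA hs j) N = coeff (PA hs (j+1)) N + (\<Sum>l=1..j. hs l * coeff (PA hs (j-l)) N)
   + (if N = 0 then H hs j (-1) else 0)"
  by (cases N) (simp_all add: SA_def coeff_sum)

lemma coeff_SB: "coeff (SB hs j) N = coeff (PB hs (j+1)) N + (\<Sum>l=1..j. hs l * coeff (PB hs (j-l)) N)"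
  by (simp add: SB_def coeff_sum)

lemma PB_van': "2 * N > m \<Longrightarrow> coeff (PB hs m) N = 0"
  by (rule PB_van) simp

lemma shA: "i \<le> k \<Longrightarrow> coeff (PA hs (2*k+1)) (n + (k-i)) = coeff (PA hs (2*i+1)) n"
  using PA_shift[of hs "2*i+1" "k-i" n] by (simp add: algebra_simps)
lemma shB: "i \<le> k \<Longrightarrow> coeff (PB hs (2*k+1)) (n + (k-i)) = coeff (PB hs (2*i+1)) n"
  using PB_shift[of hs "2*i+1" "k-i" n] by (simp add: algebra_simps)
lemma shA2: "i \<le> k \<Longrightarrow> coeff (PA hs (2*k+1+1)) (n + (k-i)) = coeff (PA hs (2*i+1+1)) n"
  using PA_shift[of hs "2*i+2" "k-i" n] by (simp add: algebra_simps)
lemma shB2: "i \<le> k \<Longrightarrow> coeff (PB hs (2*k+1+1)) (n + (k-i)) = coeff (PB hs (2*i+1+1)) n"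
  using PB_shift[of hs "2*i+2" "k-i" n] by (simp add: algebra_simps)

lemma shSB: "coeff (SB hs (2*(i+d)+1)) (n + d) = coeff (SB hs (2*i+1)) n"
proof -
  have "coeff (SB hs (2*(i+d)+1)) (n + d) = coeff (PB hs (2*(i+d)+1+1)) (n + ((i+d)-i))
     + (\<Sum>l=1..2*(i+d)+1. hs l * coeff (PB hs (2*(i+d)+1-l)) (n + ((i+d)-i)))"
    by (simp only: coeff_SB) simp
  also have "\<dots> = coeff (PB hs (2*i+1+1)) n + (\<Sum>l=1..2*i+1. hs l * coeff (PB hs (2*i+1-l)) n)"
    using shB2[of i "i+d" hs n] sum_shift_gen[of "PB hs" i "i+d" hs n, OF PB_shift PB_van']
    by (simp only:)
  also have "\<dots> = coeff (SB hs (2*i+1)) n" by (simp only: coeff_SB)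
  finally show ?thesis .
qed

lemma PB_odd_step0: "coeff (PB hs (2*i+3)) 0 = - H hs (2*i+1) (-1)"
proof -
  have e: "2*i+3 = Suc (Suc (Suc (2*i)))" by simp
  show ?thesis unfolding e by simp
qed

lemma PA_odd_step0: "coeff (PA hs (2*i+3)) 0 = - H hs (2*i+1) (-2)"
proof -
  have e: "2*i+3 = Suc (Suc (Suc (2*i)))" by simp
  show ?thesis unfolding e by simp
qed

lemma shSA: "0 < d \<Longrightarrow> coeff (SA hs (2*(i+d)+1)) (n + d)
   = coeff (SA hs (2*i+1)) n + (if n = 0 then coeff (PB hs (2*(i+d)+1)) (d-1) else 0)"
proof -
  assume d: "0 < d"
  have a: "coeff (PB hs (2*(i+d)+1)) (d-1) = coeff (PB hs (2*i+3)) 0"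
    using PB_shift[of hs "2*i+3" "d-1" 0] d by (simp add: algebra_simps)
  have "coeff (SA hs (2*(i+d)+1)) (n + d) = coeff (PA hs (2*(i+d)+1+1)) (n + ((i+d)-i))
     + (\<Sum>l=1..2*(i+d)+1. hs l * coeff (PA hs (2*(i+d)+1-l)) (n + ((i+d)-i)))"
    using d by (simp only: coeff_SA) simp
  also have "\<dots> = coeff (PA hs (2*i+1+1)) n + (\<Sum>l=1..2*i+1. hs l * coeff (PA hs (2*i+1-l)) n)"
    using shA2[of i "i+d" hs n] sum_shift_gen[of "PA hs" i "i+d" hs n, OF PA_shift PA_van]
    by (simp only:)
  also have "\<dots> = coeff (SA hs (2*i+1)) n - (if n = 0 then H hs (2*i+1) (-1) else 0)"
    by (simp only: coeff_SA) simp
  finally show ?thesis unfolding a PB_odd_step0 by simp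
qed

lemma part3:
  assumes ik: "i \<le> k"
  shows "V hs (2*i+1) = plus_part (k - i) (V hs (2*k+1))
            - E21 (if i < k then coeff (V hs (2*k+1) $ 1 $ 2) (k - i - 1) else 0)"
proof (cases "i = k")
  case True
  then show ?thesis
    by (simp add: vec_eq_iff forall_2 plus_part_def E21_def)
next
  case False
  then obtain d where d: "k = i + d" "0 < d" using ik by (metis le_Suc_ex le_neq_implies_less less_add_same_cancel1)
  have e11: "\<forall>n. coeff (PA hs (2*i+1)) n = coeff (PA hs (2*k+1)) (n + (k-i))"
    using shA[of i k hs] ik by simp
  have e12: "\<forall>n. coeff (PB hs (2*i+1)) n = coeff (PB hs (2*k+1)) (n + (k-i))"
    using shB[of i k hs] ik by simp
  have e22: "\<forall>n. coeff (SB hs (2*i+1)) n = coeff (SB hs (2*k+1)) (n + (k-i))"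
    using shSB[where hs=hs and i=i and d=d] d by simp
  have e21: "\<forall>n. coeff (SA hs (2*i+1)) n = coeff (SA hs (2*k+1)) (n + (k-i))
      - (if n = 0 then coeff (PB hs (2*k+1)) (k-i-1) else 0)"
    using shSA[where hs=hs and i=i and d=d] d by simp
  have cc: "\<And>a::complex. \<And>n. coeff [:a:] n = (if n = 0 then a else 0)"
    by (simp add: coeff_pCons split: nat.split)
  show ?thesis
    using e11 e12 e21 e22 d
    by (simp add: vec_eq_iff forall_2 plus_part_def E21_def V11 V12 V21 V22 poly_eq_iff
        coeff_poly_shift cc)
qed



lemma odd_vanish_sum:
  fixes g :: "nat \<Rightarrow> complex"
  assumes "\<And>j. g (2*j+1) = 0"
  shows "(\<Sum>l=1..2*K+1. g l) = (\<Sum>j<K. g (2*j+2))"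
proof (induction K)
  case 0 then show ?case using assms[of 0] by simp
next
  case (Suc K)
  have "(\<Sum>l=1..2*Suc K+1. g l) = (\<Sum>l=1..2*K+1. g l) + g (2*K+2) + g (2*K+3)"
    by (simp add: numeral_3_eq_3)
  also have "g (2*K+3) = 0" using assms[of "Suc K"] by (simp add: numeral_3_eq_3)
  finally show ?case using Suc by simp
qed

lemma PB_even: "PB hs (2*m) = 0"
  using PAB_even by blast
lemma PA_even: "PA hs (2*m) = monom 1 m"
  using PAB_even by blast

lemma trace0: "coeff (PA hs (2*k+1)) 0 + coeff (SB hs (2*k+1)) 0 = 0"
proof (cases k)
  case 0 then show ?thesis by (simp add: SB_def numeral_2_eq_2)
next
  case (Suc k')
  have k: "2*k+1 = 2*k'+3" using Suc by simp
  have a: "coeff (PA hs (2*k+1)) 0 = - (\<Sum>j\<le>k'. coeff (PB hs (2*k'+1)) j * hs (2 + 2*j))"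
    unfolding k PA_odd_step0 using H_neg[of hs "2*k'+1" k' 2] degree_PB[of "2*k'+1" k' hs] by simp
  have b1: "coeff (PB hs (2*k+1+1)) 0 = 0"
    using PB_even[of hs "k+1"] by (simp add: algebra_simps)
  have b2: "(\<Sum>l=1..2*k+1. hs l * coeff (PB hs (2*k+1-l)) 0)
     = (\<Sum>j<k. hs (2*j+2) * coeff (PB hs (2*k+1-(2*j+2))) 0)"
  proof (rule odd_vanish_sum)
    fix j
    have "2*k+1-(2*j+1) = 2*(k-j)" by simp
    then show "hs (2*j+1) * coeff (PB hs (2*k+1-(2*j+1))) 0 = 0" using PB_even[of hs "k-j"] by simp
  qed
  have b3: "(\<Sum>j<k. hs (2*j+2) * coeff (PB hs (2*k+1-(2*j+2))) 0)
     = (\<Sum>j\<le>k'. coeff (PB hs (2*k'+1)) j * hs (2 + 2*j))"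
    unfolding Suc lessThan_Suc_atMost
  proof (rule sum.cong)
    fix j assume "j \<in> {..k'}"
    then have e: "2*Suc k'+1-(2*j+2) = 2*(k'-j)+1" "2*k'+1 = (2*(k'-j)+1) + 2*j" by auto
    show "hs (2*j+2) * coeff (PB hs (2*Suc k'+1-(2*j+2))) 0 = coeff (PB hs (2*k'+1)) j * hs (2 + 2*j)"
      unfolding e using PB_shift[of hs "2*(k'-j)+1" j 0] by (simp add: algebra_simps)
  qed simp
  show ?thesis unfolding coeff_SB b1 b2 b3 a by simp
qed

lemma traceT: "coeff (PA hs (2*k+1)) n + coeff (SB hs (2*k+1)) n = 0"
proof (induction n arbitrary: k)
  case 0 then show ?case by (rule trace0)
next
  case (Suc n)
  show ?case
  proof (cases k)
    case 0 then show ?thesis by (simp add: SB_def numeral_2_eq_2)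
  next
    case (Suc k')
    have a: "coeff (PA hs (2*k+1)) (Suc n) = coeff (PA hs (2*k'+1)) n"
      using PA_shift1[of hs "2*k'+1" n] Suc by (simp add: algebra_simps)
    have b: "coeff (SB hs (2*k+1)) (Suc n) = coeff (SB hs (2*k'+1)) n"
      using shSB[where hs=hs and i=k' and d=1 and n=n] Suc by simp
    show ?thesis unfolding a b by (rule Suc.IH)
  qed
qed

lemma trace_V: "trace (V hs (2*k+1)) = 0"
proof -
  have "PA hs (2*k+1) + SB hs (2*k+1) = 0"
    by (rule poly_eqI) (use traceT[where hs=hs and k=k] in simp)
  then show ?thesis by (simp add: trace_def sum_2 V11 V22)
qed

lemma H_dep:
  assumes "PB hs' m = PB hs m" "\<forall>l'. 1 \<le> l' \<and> l' < l + m \<longrightarrow> hs' l' = hs l'" "l \<ge> 1"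
  shows "H hs' m (- int l) = H hs m (- int l)"
proof -
  have d: "degree (PB hs m) \<le> m" "degree (PB hs' m) \<le> m" by (auto intro: degree_PB)
  show ?thesis unfolding H_neg[OF d(1) assms(3)] H_neg[OF d(2) assms(3)]
  proof (rule sum.cong)
    fix j assume "j \<in> {..m}"
    show "coeff (PB hs' m) j * hs' (l + 2 * j) = coeff (PB hs m) j * hs (l + 2 * j)"
    proof (cases "2*j \<ge> m")
      case True then show ?thesis using PB_van[of m j] by (simp add: assms(1))
    next
      case False then show ?thesis using assms by simp
    qed
  qed simp
qed

lemma dep:
  assumes ag: "\<forall>l. 1 \<le> l \<and> l \<le> n \<longrightarrow> hs' l = hs l"
  shows "m \<le> n+1 \<Longrightarrow> PA hs' m = PA hs m \<and> PB hs' m = PB hs m"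
proof (induction m rule: less_induct)
  case (less m)
  show ?case
  proof (cases "m < 3")
    case True
    then have "m = 0 \<or> m = 1 \<or> m = 2" by auto
    then show ?thesis by (auto simp: numeral_2_eq_2)
  next
    case False
    define k where "k = m - 3"
    have k: "m = Suc (Suc (Suc k))" using False unfolding k_def by arith
    have IH: "PA hs' (Suc k) = PA hs (Suc k) \<and> PB hs' (Suc k) = PB hs (Suc k)"
      using less k by simp
    have h2: "H hs' (Suc k) (- int 2) = H hs (Suc k) (- int 2)"
      by (rule H_dep) (use IH ag less.prems k in auto)
    have h1: "H hs' (Suc k) (- int 1) = H hs (Suc k) (- int 1)"
      by (rule H_dep) (use IH ag less.prems k in auto)
    show ?thesis using IH h1 h2 k by simp
  qed
qed

lemma V_dep:
  assumes ag: "\<forall>l\<in>{1..2*k+1}. hs' l = hs l"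
  shows "V hs' (2*k+1) = V hs (2*k+1)"
proof -
  have ag': "\<forall>l. 1 \<le> l \<and> l \<le> 2*k+1 \<longrightarrow> hs' l = hs l" using ag by auto
  note D = dep[OF ag']
  have h: "H hs' (2*k+1) (- int 1) = H hs (2*k+1) (- int 1)"
    by (rule H_dep) (use D ag' in auto)
  have sa: "SA hs' (2*k+1) = SA hs (2*k+1)"
    unfolding SA_def using D[of "2*k+1+1"] D ag' h
    by (intro arg_cong2[where f="(+)"] sum.cong) auto
  have sb: "SB hs' (2*k+1) = SB hs (2*k+1)"
    unfolding SB_def using D[of "2*k+1+1"] D ag'
    by (intro arg_cong2[where f="(+)"] sum.cong) auto
  show ?thesis using D[of "2*k+1"] sa sb
    by (simp add: vec_eq_iff forall_2 V11 V12 V21 V22)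
qed



lemma peel:
  fixes c x y :: "nat \<Rightarrow> complex"
  assumes "(\<Sum>j\<le>m. c j * x j) = (\<Sum>j\<le>m. c j * y j)" "c m = 1" "\<forall>j<m. x j = y j"
  shows "x m = y m"
proof -
  have "(\<Sum>j<m. c j * x j) = (\<Sum>j<m. c j * y j)" using assms(3) by (intro sum.cong) auto
  then show ?thesis using assms(1,2) unfolding lessThan_Suc_atMost[symmetric] sum.lessThan_Suc by simp
qed

lemma PB_top: "coeff (PB hs (2*m+1)) m = 1"
  using PB_shift[of hs 1 m 0] by (simp add: algebra_simps)

lemma Xodd: "m < k \<Longrightarrow> coeff (PB hs (2*k+1)) (k-m-1) = - (\<Sum>j\<le>m. coeff (PB hs (2*m+1)) j * hs (1+2*j))"
proof -
  assume mk: "m < k"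
  have "coeff (PB hs (2*k+1)) (k-m-1) = coeff (PB hs (2*m+3)) 0"
    using PB_shift[of hs "2*m+3" "k-m-1" 0] mk by (simp add: algebra_simps)
  also have "\<dots> = - H hs (2*m+1) (- int 1)" using PB_odd_step0 by simp
  also have "\<dots> = - (\<Sum>j\<le>m. coeff (PB hs (2*m+1)) j * hs (1+2*j))"
    using H_neg[of hs "2*m+1" m 1] degree_PB[of "2*m+1" m hs] by simp
  finally show ?thesis .
qed

lemma Xeven: "m < k \<Longrightarrow> coeff (PA hs (2*k+1)) (k-m-1) = - (\<Sum>j\<le>m. coeff (PB hs (2*m+1)) j * hs (2+2*j))"
proof -
  assume mk: "m < k"
  have "coeff (PA hs (2*k+1)) (k-m-1) = coeff (PA hs (2*m+3)) 0"
    using PA_shift[of hs "2*m+3" "k-m-1" 0] mk by (simp add: algebra_simps)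
  also have "\<dots> = - H hs (2*m+1) (- int 2)" using PA_odd_step0 by simp
  also have "\<dots> = - (\<Sum>j\<le>m. coeff (PB hs (2*m+1)) j * hs (2+2*j))"
    using H_neg[of hs "2*m+1" m 2] degree_PB[of "2*m+1" m hs] by simp
  finally show ?thesis .
qed

lemma Fform: "coeff (SA hs (2*k+1)) 0 = coeff (PA hs (2*k+1+1)) 0
   + (\<Sum>l=1..2*k. hs l * coeff (PA hs (2*k+1-l)) 0)
   + (\<Sum>j<k. coeff (PB hs (2*k+1)) j * hs (1+2*j)) + 2 * hs (2*k+1)"
proof -
  have s1: "(\<Sum>l=1..2*k+1. hs l * coeff (PA hs (2*k+1-l)) 0)
     = (\<Sum>l=1..2*k. hs l * coeff (PA hs (2*k+1-l)) 0) + hs (2*k+1)"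
    by simp
  have s2: "H hs (2*k+1) (-1) = (\<Sum>j<k. coeff (PB hs (2*k+1)) j * hs (1+2*j)) + hs (2*k+1)"
    using H_neg[of hs "2*k+1" k 1] degree_PB[of "2*k+1" k hs] PB_top[of hs k]
    unfolding lessThan_Suc_atMost[symmetric] sum.lessThan_Suc by (simp add: algebra_simps)
  show ?thesis unfolding coeff_SA s1 s2 by simp
qed

lemma inj_part:
  assumes eq: "V hs' (2*k+1) = V hs (2*k+1)"
  shows "\<forall>l\<in>{1..2*k+1}. hs' l = hs l"
proof -
  have PAe: "PA hs' (2*k+1) = PA hs (2*k+1)" using V11[of hs' "2*k+1"] V11[of hs "2*k+1"] eq by simp
  have PBe: "PB hs' (2*k+1) = PB hs (2*k+1)" using V12[of hs' "2*k+1"] V12[of hs "2*k+1"] eq by simp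
  have SAe: "SA hs' (2*k+1) = SA hs (2*k+1)" using V21[of hs' "2*k+1"] V21[of hs "2*k+1"] eq by simp
  have cPB: "coeff (PB hs' (2*m+1)) j = coeff (PB hs (2*m+1)) j" if "m \<le> k" for m j
    using shB[OF that, of hs' j] shB[OF that, of hs j] PBe by simp
  have step: "m \<le> k \<Longrightarrow> \<forall>l. 1 \<le> l \<and> l \<le> 2*m \<longrightarrow> hs' l = hs l" for m
  proof (induction m)
    case 0 then show ?case by simp
  next
    case (Suc m)
    then have mk: "m < k" by simp
    have IH: "\<forall>l. 1 \<le> l \<and> l \<le> 2*m \<longrightarrow> hs' l = hs l" using Suc by simp
    have cs: "(\<Sum>j\<le>m. coeff (PB hs' (2*m+1)) j * f j) = (\<Sum>j\<le>m. coeff (PB hs (2*m+1)) j * f j)" for f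
      using cPB[of m] mk by simp
    have o0: "(\<lambda>j. hs' (1+2*j)) m = (\<lambda>j. hs (1+2*j)) m"
    proof (rule peel[where c="\<lambda>j. coeff (PB hs (2*m+1)) j" and x="\<lambda>j. hs' (1+2*j)" and y="\<lambda>j. hs (1+2*j)"])
      show "(\<Sum>j\<le>m. coeff (PB hs (2*m+1)) j * hs' (1+2*j)) = (\<Sum>j\<le>m. coeff (PB hs (2*m+1)) j * hs (1+2*j))"
        using Xodd[OF mk, of hs'] Xodd[OF mk, of hs] PBe cs[of "\<lambda>j. hs' (1+2*j)"] by simp
      show "coeff (PB hs (2*m+1)) m = 1" by (rule PB_top)
      show "\<forall>j<m. (\<lambda>j. hs' (1+2*j)) j = (\<lambda>j. hs (1+2*j)) j" using IH by simp
    qed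
    have o: "hs' (1 + 2*m) = hs (1 + 2*m)" using o0 by simp
    have e0: "(\<lambda>j. hs' (2+2*j)) m = (\<lambda>j. hs (2+2*j)) m"
    proof (rule peel[where c="\<lambda>j. coeff (PB hs (2*m+1)) j" and x="\<lambda>j. hs' (2+2*j)" and y="\<lambda>j. hs (2+2*j)"])
      show "(\<Sum>j\<le>m. coeff (PB hs (2*m+1)) j * hs' (2+2*j)) = (\<Sum>j\<le>m. coeff (PB hs (2*m+1)) j * hs (2+2*j))"
        using Xeven[OF mk, of hs'] Xeven[OF mk, of hs] PAe cs[of "\<lambda>j. hs' (2+2*j)"] by simp
      show "coeff (PB hs (2*m+1)) m = 1" by (rule PB_top)
      show "\<forall>j<m. (\<lambda>j. hs' (2+2*j)) j = (\<lambda>j. hs (2+2*j)) j" using IH by simp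
    qed
    have e: "hs' (2 + 2*m) = hs (2 + 2*m)" using e0 by simp
    show ?case
    proof (intro allI impI)
      fix l assume l: "1 \<le> l \<and> l \<le> 2 * Suc m"
      then have "l \<le> 2*m \<or> l = 1 + 2*m \<or> l = 2 + 2*m" by auto
      then show "hs' l = hs l" using IH o e l by auto
    qed
  qed
  have A: "\<forall>l. 1 \<le> l \<and> l \<le> 2*k \<longrightarrow> hs' l = hs l" using step[of k] by simp
  have D: "PA hs' m = PA hs m" if "m \<le> 2*k+1" for m using dep[OF A, of m] that by simp
  have t1: "coeff (PA hs' (2*k+1+1)) 0 = coeff (PA hs (2*k+1+1)) 0"
    using PA_even[of hs' "k+1"] PA_even[of hs "k+1"] by (simp add: algebra_simps)
  have t2: "(\<Sum>l=1..2*k. hs' l * coeff (PA hs' (2*k+1-l)) 0) = (\<Sum>l=1..2*k. hs l * coeff (PA hs (2*k+1-l)) 0)"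
    using A D by (intro sum.cong) auto
  have t3: "(\<Sum>j<k. coeff (PB hs' (2*k+1)) j * hs' (1+2*j)) = (\<Sum>j<k. coeff (PB hs (2*k+1)) j * hs (1+2*j))"
    using A PBe by (intro sum.cong) auto
  have "coeff (SA hs' (2*k+1)) 0 = coeff (SA hs (2*k+1)) 0" using SAe by simp
  then have "2 * hs' (2*k+1) = 2 * hs (2*k+1)" unfolding Fform t1 t2 t3 by simp
  then have "hs' (2*k+1) = hs (2*k+1)" by simp
  then show ?thesis using A by (auto simp: le_Suc_eq)
qed

theorem mainTheorem1:
  fixes hs :: "nat \<Rightarrow> complex" and k :: nat
  shows "(\<forall>hs'. V hs' (2*k+1) = V hs (2*k+1) \<longleftrightarrow> (\<forall>l\<in>{1..2*k+1}. hs' l = hs l))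
       \<and> trace (V hs (2*k+1)) = 0
       \<and> (\<forall>i\<le>k. V hs (2*i+1) =
            plus_part (k - i) (V hs (2*k+1))
            - E21 (if i < k then coeff (V hs (2*k+1) $ 1 $ 2) (k - i - 1) else 0))"
  using inj_part V_dep trace_V part3 by blast


end
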